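(* Let $\lambda\neq0$ be real, let $\mathcal{F}_\lambda=\{m(x)\,dx^\lambda: m\in C^\infty(S^1)\}$ with the action $L_\xi(m\,dx^\lambda)=(m\circ\xi)(\partial_x\xi)^\lambda dx^\lambda$ of $\xi\in\mathrm{Diff}(S^1)$, and let $\mathcal{M}_\lambda\subset\mathcal{F}_\lambda$ be the set of those $m\,dx^\lambda$ with $m(x)\neq0$ for all $x\in S^1$. Then the map $$m\,dx^\lambda\mapsto \mathrm{sgn}(m)\,(H_{-1})^\lambda:\ \mathcal{M}_\lambda\to\mathbb{R}\setminus\{0\},\qquad H_{-1}=\int_0^1|m|^{1/\lambda}dx,$$ is constant on the $\mathrm{Diff}(S^1)$-orbits in $\mathcal{M}_\lambda$ and induces a bijection between the orbit space $\mathcal{M}_\lambda/\mathrm{Diff}(S^1)$ and $\mathbb{R}\setminus\{0\}$.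
   Context: $S^1=\mathbb{R}/\mathbb{Z}\simeq[0,1)$; $\mathrm{Diff}(S^1)$ is the group of orientation-preserving smooth circle diffeomorphisms. Since $m$ is nowhere zero on the connected circle, $\mathrm{sgn}(m)\in\{\pm1\}$ is constant. *)

theory Defs
  imports "HOL-Analysis.Analysis"
begin

text \<open>Functions on S^1 = R/Z are represented as 1-periodic functions on R.
  C^infinity: all iterated derivatives exist everywhere.\<close>
definition smooth :: "(real \<Rightarrow> real) \<Rightarrow> bool" where
  "smooth f \<longleftrightarrow> (\<forall>k x. ((deriv ^^ k) f) differentiable (at x))"

definition periodic1 :: "(real \<Rightarrow> real) \<Rightarrow> bool" where
  "periodic1 f \<longleftrightarrow> (\<forall>x. f (x + 1) = f x)"

text \<open>Densities m dx^lambda, identified with their coefficient m.\<close>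
definition F_dens :: "(real \<Rightarrow> real) set" where
  "F_dens = {m. smooth m \<and> periodic1 m}"

definition M_dens :: "(real \<Rightarrow> real) set" where
  "M_dens = {m \<in> F_dens. \<forall>x. m x \<noteq> 0}"

text \<open>Diff(S^1) (orientation preserving), represented by lifts to R:
  smooth xi with xi(x+1) = xi(x)+1 and xi' > 0. Different lifts of the same
  circle diffeomorphism differ by an integer and act identically.\<close>
definition Diff_S1 :: "(real \<Rightarrow> real) set" where
  "Diff_S1 = {\<xi>. smooth \<xi> \<and> (\<forall>x. \<xi> (x + 1) = \<xi> x + 1) \<and> (\<forall>x. deriv \<xi> x > 0)}"

definition L_act :: "real \<Rightarrow> (real \<Rightarrow> real) \<Rightarrow> (real \<Rightarrow> real) \<Rightarrow> (real \<Rightarrow> real)" where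
  "L_act lam \<xi> m = (\<lambda>x. m (\<xi> x) * (deriv \<xi> x) powr lam)"

definition orbit_rel :: "real \<Rightarrow> ((real \<Rightarrow> real) \<times> (real \<Rightarrow> real)) set" where
  "orbit_rel lam = {(m, n). m \<in> M_dens \<and> n \<in> M_dens \<and> (\<exists>\<xi>\<in>Diff_S1. n = L_act lam \<xi> m)}"

text \<open>H_{-1} and the invariant sgn(m) * (H_{-1})^lambda; sgn(m) is the constant sign.\<close>
definition H_neg1 :: "real \<Rightarrow> (real \<Rightarrow> real) \<Rightarrow> real" where
  "H_neg1 lam m = integral {0..1} (\<lambda>x. \<bar>m x\<bar> powr (1 / lam))"

definition inv_map :: "real \<Rightarrow> (real \<Rightarrow> real) \<Rightarrow> real" where
  "inv_map lam m = sgn (m 0) * (H_neg1 lam m) powr lam"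

end

theory Submission imports Defs begin

fun Ck :: "nat \<Rightarrow> (real \<Rightarrow> real) \<Rightarrow> bool" where
  "Ck 0 f = (\<forall>x. f differentiable (at x))"
| "Ck (Suc n) f = ((\<forall>x. f differentiable (at x)) \<and> Ck n (deriv f))"

lemma Ck_iff: "Ck n f \<longleftrightarrow> (\<forall>k\<le>n. \<forall>x. (deriv ^^ k) f differentiable (at x))"
proof (induction n arbitrary: f)
  case 0 then show ?case by simp
next
  case (Suc n)
  show ?case
  proof
    assume "Ck (Suc n) f"
    then have a: "\<forall>x. f differentiable (at x)" and b: "\<forall>k\<le>n. \<forall>x. (deriv ^^ k) (deriv f) differentiable (at x)"
      using Suc by auto
    show "\<forall>k\<le>Suc n. \<forall>x. (deriv ^^ k) f differentiable (at x)"
    proof (intro allI impI)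
      fix k x assume "k \<le> Suc n"
      then show "(deriv ^^ k) f differentiable (at x)"
        using a b by (cases k) (auto simp: funpow_Suc_right simp del: funpow.simps)
    qed
  next
    assume h: "\<forall>k\<le>Suc n. \<forall>x. (deriv ^^ k) f differentiable (at x)"
    have "\<forall>k\<le>n. \<forall>x. (deriv ^^ k) (deriv f) differentiable (at x)"
    proof (intro allI impI)
      fix k x assume "k \<le> n"
      then show "(deriv ^^ k) (deriv f) differentiable (at x)"
        using h[rule_format, of "Suc k" x] by (simp add: funpow_Suc_right del: funpow.simps)
    qed
    moreover have "\<forall>x. f differentiable (at x)" using h[rule_format, of 0] by simp
    ultimately show "Ck (Suc n) f" using Suc by simp
  qed
qed

lemma smooth_Ck: "smooth f \<longleftrightarrow> (\<forall>n. Ck n f)"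
  unfolding smooth_def Ck_iff by blast

lemma Ck_diff: "Ck n f \<Longrightarrow> f differentiable (at x)"
  by (cases n) auto

lemma Ck_DERIV: "Ck n f \<Longrightarrow> (f has_real_derivative deriv f x) (at x)"
  using Ck_diff DERIV_deriv_iff_real_differentiable by blast

lemma Ck_cont: "Ck n f \<Longrightarrow> isCont f x"
  using Ck_diff differentiable_imp_continuous_within by blast

lemma Ck_Suc_mono: "Ck (Suc n) f \<Longrightarrow> Ck n f"
proof (induction n arbitrary: f)
  case 0 then show ?case by simp
next
  case (Suc n) then show ?case by simp
qed

lemma Ck_deriv: "Ck (Suc n) f \<Longrightarrow> Ck n (deriv f)" by simp

lemma Ck_SucI: "(\<And>x. (f has_real_derivative f' x) (at x)) \<Longrightarrow> Ck n f' \<Longrightarrow> Ck (Suc n) f"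
proof -
  assume d: "\<And>x. (f has_real_derivative f' x) (at x)" and c: "Ck n f'"
  have "deriv f = f'" using d DERIV_imp_deriv by blast
  moreover have "\<forall>x. f differentiable (at x)" using d real_differentiable_def by blast
  ultimately show ?thesis using c by simp
qed

lemma Ck_const: "Ck n (\<lambda>x. c)"
proof (induction n arbitrary: c)
  case 0 then show ?case by simp
next
  case (Suc n) then show ?case by (intro Ck_SucI[where f'="\<lambda>x. 0"]) auto
qed

lemma Ck_id: "Ck n (\<lambda>x. x)"
proof (cases n)
  case 0 then show ?thesis by simp
next
  case (Suc k) then show ?thesis by (auto intro!: Ck_SucI[where f'="\<lambda>x. 1"] Ck_const)
qed

lemma Ck_add: "Ck n f \<Longrightarrow> Ck n g \<Longrightarrow> Ck n (\<lambda>x. f x + g x)"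
proof (induction n arbitrary: f g)
  case 0 then show ?case by simp
next
  case (Suc n)
  have f': "Ck n (deriv f)" and g': "Ck n (deriv g)" using Suc.prems Ck_deriv by blast+
  have df: "\<And>x. (f has_real_derivative deriv f x) (at x)" using Ck_DERIV[OF Suc.prems(1)] .
  have dg: "\<And>x. (g has_real_derivative deriv g x) (at x)" using Ck_DERIV[OF Suc.prems(2)] .
  show ?case
    by (rule Ck_SucI[where f'="\<lambda>x. deriv f x + deriv g x"])
       (auto intro!: derivative_eq_intros df dg Suc.IH f' g')
qed

lemma Ck_mult: "Ck n f \<Longrightarrow> Ck n g \<Longrightarrow> Ck n (\<lambda>x. f x * g x)"
proof (induction n arbitrary: f g)
  case 0 then show ?case by simp
next
  case (Suc n)
  have f: "Ck n f" and g: "Ck n g" using Suc.prems Ck_Suc_mono by blast+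
  have f': "Ck n (deriv f)" and g': "Ck n (deriv g)" using Suc.prems Ck_deriv by blast+
  have df: "\<And>x. (f has_real_derivative deriv f x) (at x)" using Ck_DERIV[OF Suc.prems(1)] .
  have dg: "\<And>x. (g has_real_derivative deriv g x) (at x)" using Ck_DERIV[OF Suc.prems(2)] .
  have "Ck n (\<lambda>x. deriv f x * g x + f x * deriv g x)"
    using Suc.IH[OF f' g] Suc.IH[OF f g'] by (rule Ck_add)
  moreover have "((\<lambda>x. f x * g x) has_real_derivative deriv f x * g x + f x * deriv g x) (at x)" for x
    using DERIV_mult[OF df dg] by (simp add: algebra_simps)
  ultimately show ?case
    by (intro Ck_SucI[where f'="\<lambda>x. deriv f x * g x + f x * deriv g x"])
qed

lemma Ck_comp: "Ck n f \<Longrightarrow> Ck n g \<Longrightarrow> Ck n (\<lambda>x. f (g x))"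
proof (induction n arbitrary: f g)
  case 0
  have "((\<lambda>x. f (g x)) has_real_derivative deriv f (g x) * deriv g x) (at x)" for x
    using DERIV_chain2[OF Ck_DERIV[OF 0(1)] Ck_DERIV[OF 0(2)]] .
  then show ?case using real_differentiable_def by auto
next
  case (Suc n)
  have g: "Ck n g" using Suc.prems Ck_Suc_mono by blast+
  have f': "Ck n (deriv f)" and g': "Ck n (deriv g)" using Suc.prems Ck_deriv by blast+
  have "Ck n (\<lambda>x. deriv f (g x) * deriv g x)"
    using Suc.IH[OF f' g] g' by (rule Ck_mult)
  moreover have "((\<lambda>x. f (g x)) has_real_derivative deriv f (g x) * deriv g x) (at x)" for x
    using DERIV_chain2[OF Ck_DERIV[OF Suc.prems(1)] Ck_DERIV[OF Suc.prems(2)]] .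
  ultimately show ?case
    by (intro Ck_SucI[where f'="\<lambda>x. deriv f (g x) * deriv g x"])
qed

lemma Ck_recip: "Ck n h \<Longrightarrow> (\<And>x. h x \<noteq> 0) \<Longrightarrow> Ck n (\<lambda>x. 1 / h x)"
proof (induction n arbitrary: h)
  case 0 
  have "((\<lambda>x. 1 / h x) has_real_derivative ((- 1) * deriv h x) * ((1 / h x) * (1 / h x))) (at x)" for x
    using 0 by (auto intro!: derivative_eq_intros Ck_DERIV[OF 0(1)] simp: field_simps power2_eq_square)
  then show ?case using real_differentiable_def by auto
next
  case (Suc n)
  have h: "Ck n h" using Suc.prems Ck_Suc_mono by blast
  have h': "Ck n (deriv h)" using Suc.prems Ck_deriv by blast
  have r: "Ck n (\<lambda>x. 1 / h x)" using Suc.IH[OF h] Suc.prems(2) by blast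
  have "Ck n (\<lambda>x. (- 1) * deriv h x)" using Ck_const h' by (rule Ck_mult)
  then have "Ck n (\<lambda>x. ((- 1) * deriv h x) * ((1 / h x) * (1 / h x)))"
    using Ck_mult[OF r r] by (rule Ck_mult)
  moreover have "((\<lambda>x. 1 / h x) has_real_derivative ((- 1) * deriv h x) * ((1 / h x) * (1 / h x))) (at x)" for x
    using Suc.prems(2) by (auto intro!: derivative_eq_intros Ck_DERIV[OF Suc.prems(1)] simp: field_simps power2_eq_square)
  ultimately show ?case by (intro Ck_SucI)
qed

lemma Ck_powr: "Ck n h \<Longrightarrow> (\<And>x. h x > 0) \<Longrightarrow> Ck n (\<lambda>x. h x powr a)"
proof (induction n arbitrary: h a)
  case 0
  have "((\<lambda>x. h x powr a) has_real_derivative a * (h x powr (a - 1) * deriv h x)) (at x)" for x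
    using 0 by (auto intro!: derivative_eq_intros Ck_DERIV[OF 0(1)] simp: field_simps)
  then show ?case using real_differentiable_def by auto
next
  case (Suc n)
  have h: "Ck n h" using Suc.prems Ck_Suc_mono by blast
  have h': "Ck n (deriv h)" using Suc.prems Ck_deriv by blast
  have r: "Ck n (\<lambda>x. h x powr (a - 1))" using Suc.IH[OF h] Suc.prems(2) by blast
  have "Ck n (\<lambda>x. a * (h x powr (a - 1) * deriv h x))"
    using Ck_const Ck_mult[OF r h'] by (rule Ck_mult)
  moreover have "((\<lambda>x. h x powr a) has_real_derivative a * (h x powr (a - 1) * deriv h x)) (at x)" for x
    using Suc.prems(2) by (auto intro!: derivative_eq_intros Ck_DERIV[OF Suc.prems(1)] simp: field_simps)
  ultimately show ?case by (intro Ck_SucI)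
qed


lemma inv_DERIV:
  assumes f: "Ck n f" and pos: "\<And>x. deriv f x \<noteq> 0"
    and fg: "\<And>x. f (g x) = x" and gf: "\<And>y. g (f y) = y"
  shows "(g has_real_derivative 1 / deriv f (g y)) (at y)"
proof -
  have c: "isCont g (f (g y))"
    by (rule isCont_inverse_function[where d=1]) (auto simp: gf Ck_cont[OF f])
  have "(g has_real_derivative inverse (deriv f (g y))) (at y)"
    by (rule DERIV_inverse_function[where a="y - 1" and b="y + 1"])
       (use c fg pos Ck_DERIV[OF f] in auto)
  then show ?thesis by (simp add: divide_inverse)
qed

lemma Ck_inv:
  assumes pos: "\<And>x. deriv f x \<noteq> 0"
    and fg: "\<And>x. f (g x) = x" and gf: "\<And>y. g (f y) = y"
  shows "Ck n f \<Longrightarrow> Ck n g"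
proof (induction n)
  case 0
  then show ?case using inv_DERIV[OF 0 pos fg gf] real_differentiable_def by auto
next
  case (Suc n)
  have f: "Ck n f" using Suc.prems Ck_Suc_mono by blast
  have f': "Ck n (deriv f)" using Suc.prems Ck_deriv by blast
  have g: "Ck n g" using Suc.IH[OF f] .
  have "Ck n (\<lambda>y. 1 / deriv f (g y))"
    using Ck_comp[OF f' g] pos by (rule Ck_recip)
  then show ?case
    using inv_DERIV[OF Suc.prems pos fg gf] by (intro Ck_SucI)
qed

lemma smooth_const: "smooth (\<lambda>x. c)" by (simp add: smooth_Ck Ck_const)
lemma smooth_id: "smooth (\<lambda>x. x)" by (simp add: smooth_Ck Ck_id)
lemma smooth_add: "smooth f \<Longrightarrow> smooth g \<Longrightarrow> smooth (\<lambda>x. f x + g x)" by (simp add: smooth_Ck Ck_add)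
lemma smooth_mult: "smooth f \<Longrightarrow> smooth g \<Longrightarrow> smooth (\<lambda>x. f x * g x)" by (simp add: smooth_Ck Ck_mult)
lemma smooth_comp: "smooth f \<Longrightarrow> smooth g \<Longrightarrow> smooth (\<lambda>x. f (g x))" by (simp add: smooth_Ck Ck_comp)
lemma smooth_powr: "smooth h \<Longrightarrow> (\<And>x. h x > 0) \<Longrightarrow> smooth (\<lambda>x. h x powr a)" by (simp add: smooth_Ck Ck_powr)
lemma smooth_deriv: "smooth f \<Longrightarrow> smooth (deriv f)" unfolding smooth_Ck using Ck_deriv by blast
lemma smooth_DERIV: "smooth f \<Longrightarrow> (f has_real_derivative deriv f x) (at x)"
  by (simp add: smooth_Ck Ck_DERIV)
lemma smooth_cont: "smooth f \<Longrightarrow> isCont f x"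
  by (simp add: smooth_Ck Ck_cont)
lemma smooth_antideriv: "(\<And>x. (P has_real_derivative f x) (at x)) \<Longrightarrow> smooth f \<Longrightarrow> smooth P"
proof -
  assume d: "\<And>x. (P has_real_derivative f x) (at x)" and s: "smooth f"
  have "Ck n P" for n
    using Ck_SucI[OF d, of n] s unfolding smooth_Ck by (auto intro: Ck_Suc_mono)
  then show ?thesis unfolding smooth_Ck by blast
qed
lemma smooth_inv: "smooth f \<Longrightarrow> (\<And>x. deriv f x \<noteq> 0) \<Longrightarrow> (\<And>x. f (g x) = x) \<Longrightarrow> (\<And>y. g (f y) = y) \<Longrightarrow> smooth g"
  using Ck_inv unfolding smooth_Ck by blast

lemma antideriv:
  fixes g :: "real \<Rightarrow> real"
  assumes cg: "\<And>x. isCont g x"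
  shows "\<exists>P. \<forall>x. (P has_real_derivative g x) (at x)"
proof -
  define P where "P x = integral {0..x} g - integral {x..0} g" for x
  have co: "continuous_on S g" for S using cg by (simp add: continuous_at_imp_continuous_on)
  have "(P has_real_derivative g t) (at t)" for t
  proof -
    define a where "a = min (t - 1) (-1)"
    define b where "b = max (t + 1) 1"
    have ab: "a < t" "t < b" "a \<le> 0" "0 \<le> b" by (auto simp: a_def b_def)
    have eq: "integral {a..x} g - integral {a..0} g = P x" if "x \<in> {a..b}" for x
    proof (cases "x \<ge> 0")
      case True
      have "integral {a..0} g + integral {0..x} g = integral {a..x} g"
        using True ab by (intro Henstock_Kurzweil_Integration.integral_combine integrable_continuous_interval co) auto
      moreover have "integral {x..0} g = 0"
        using True by (cases "x = 0") auto
      ultimately show ?thesis unfolding P_def by linarith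
    next
      case False
      have "integral {a..x} g + integral {x..0} g = integral {a..0} g"
        using False ab that by (intro Henstock_Kurzweil_Integration.integral_combine integrable_continuous_interval co) auto
      moreover have "integral {0..x} g = 0"
        using False by auto
      ultimately show ?thesis unfolding P_def by linarith
    qed
    have "((\<lambda>x. integral {a..x} g - integral {a..0} g) has_real_derivative g t) (at t within {a..b})"
      using integral_has_real_derivative[OF co, of t] ab
      by (auto intro!: derivative_eq_intros)
    then have "(P has_real_derivative g t) (at t within {a..b})"
      by (rule has_field_derivative_transform_within[where d=1]) (use ab eq in auto)
    then show ?thesis using at_within_Icc_at[OF ab(1,2)] by simp
  qed
  then show ?thesis by blast
qed

lemma no_sign_change:
  fixes m :: "real \<Rightarrow> real"
  assumes c: "\<And>x. isCont m x" and nz: "\<And>x. m x \<noteq> 0"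
  shows "sgn (m x) = sgn (m y)"
proof -
  have noflip: False if "m u > 0" "m v < 0" for u v
  proof (cases "u \<le> v")
    case True
    have "\<exists>z\<ge>u. z \<le> v \<and> m z = 0" by (rule IVT2) (use that True c in auto)
    then obtain z where "m z = 0" by blast
    then show False using nz by blast
  next
    case False
    have "\<exists>z\<ge>v. z \<le> u \<and> m z = 0" by (rule IVT) (use that False c in auto)
    then obtain z where "m z = 0" by blast
    then show False using nz by blast
  qed
  show ?thesis
    using noflip[of x y] noflip[of y x] nz[of x] nz[of y]
    by (cases "m x > 0"; cases "m y > 0") (auto simp: sgn_if)
qed


lemma DiffD:
  assumes "\<xi> \<in> Diff_S1"
  shows "smooth \<xi>" "\<And>x. \<xi> (x + 1) = \<xi> x + 1" "\<And>x. deriv \<xi> x > 0"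
  using assms unfolding Diff_S1_def by auto

lemma Diff_shift_nat:
  assumes "\<xi> \<in> Diff_S1"
  shows "\<xi> (x + real n) = \<xi> x + real n"
proof (induction n)
  case 0 then show ?case by simp
next
  case (Suc n)
  have "\<xi> (x + real (Suc n)) = \<xi> ((x + real n) + 1)" by (simp add: algebra_simps)
  also have "\<dots> = \<xi> (x + real n) + 1" using DiffD(2)[OF assms] by blast
  finally show ?case using Suc by simp
qed

lemma Diff_shift_nat':
  assumes "\<xi> \<in> Diff_S1"
  shows "\<xi> (x - real n) = \<xi> x - real n"
  using Diff_shift_nat[OF assms, of "x - real n" n] by simp

lemma Diff_mono:
  assumes "\<xi> \<in> Diff_S1" "x < y"
  shows "\<xi> x < \<xi> y"
  using assms(2) by (rule DERIV_pos_imp_increasing)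
    (use DiffD[OF assms(1)] smooth_DERIV in blast)

lemma Diff_surj:
  assumes "\<xi> \<in> Diff_S1"
  shows "\<exists>x. \<xi> x = y"
proof -
  define n where "n = nat \<lceil>\<bar>y - \<xi> 0\<bar>\<rceil>"
  have n: "\<bar>y - \<xi> 0\<bar> \<le> real n" unfolding n_def by linarith
  have "\<xi> (0 - real n) \<le> y" "y \<le> \<xi> (0 + real n)"
    using Diff_shift_nat[OF assms, of 0 n] Diff_shift_nat'[OF assms, of 0 n] n by auto
  then have "\<exists>x\<ge>0 - real n. x \<le> 0 + real n \<and> \<xi> x = y"
    by (intro IVT) (auto intro: smooth_cont DiffD[OF assms])
  then show ?thesis by blast
qed

lemma Diff_inj:
  assumes "\<xi> \<in> Diff_S1"
  shows "inj \<xi>"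
proof (rule injI)
  fix x y assume "\<xi> x = \<xi> y"
  then show "x = y" using Diff_mono[OF assms, of x y] Diff_mono[OF assms, of y x]
    by (cases x y rule: linorder_cases) auto
qed

lemma Diff_deriv_periodic:
  assumes "\<xi> \<in> Diff_S1"
  shows "deriv \<xi> (x + 1) = deriv \<xi> x"
proof -
  have s: "smooth \<xi>" using DiffD[OF assms] by blast
  have "((\<lambda>x. \<xi> (x + 1)) has_real_derivative deriv \<xi> (x + 1) * 1) (at x)"
    by (rule DERIV_chain2[OF smooth_DERIV[OF s]]) (auto intro!: derivative_eq_intros)
  moreover have "(\<lambda>x. \<xi> (x + 1)) = (\<lambda>x. \<xi> x + 1)" using DiffD(2)[OF assms] by auto
  moreover have "((\<lambda>x. \<xi> x + 1) has_real_derivative deriv \<xi> x) (at x)"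
    using smooth_DERIV[OF s] by (auto intro!: derivative_eq_intros)
  ultimately show ?thesis using DERIV_unique by fastforce
qed

lemma deriv_comp:
  assumes "smooth \<xi>" "smooth \<eta>"
  shows "deriv (\<lambda>x. \<xi> (\<eta> x)) x = deriv \<xi> (\<eta> x) * deriv \<eta> x"
  by (rule DERIV_imp_deriv, rule DERIV_chain2[OF smooth_DERIV[OF assms(1)] smooth_DERIV[OF assms(2)]])

lemma deriv_id: "deriv (\<lambda>x. x) x = (1::real)"
  by (rule DERIV_imp_deriv) (rule DERIV_ident)

lemma Diff_id: "(\<lambda>x. x) \<in> Diff_S1"
  unfolding Diff_S1_def using smooth_id deriv_id by auto

lemma Diff_comp:
  assumes "\<xi> \<in> Diff_S1" "\<eta> \<in> Diff_S1"
  shows "(\<lambda>x. \<xi> (\<eta> x)) \<in> Diff_S1"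
  unfolding Diff_S1_def
  using DiffD[OF assms(1)] DiffD[OF assms(2)] deriv_comp[of \<xi> \<eta>]
  by (auto intro: smooth_comp)

lemma Diff_inv:
  assumes "\<xi> \<in> Diff_S1"
  shows "inv \<xi> \<in> Diff_S1" "\<And>y. \<xi> (inv \<xi> y) = y" "\<And>x. inv \<xi> (\<xi> x) = x"
proof -
  show fg: "\<xi> (inv \<xi> y) = y" for y
    using Diff_surj[OF assms, of y] by (metis f_inv_into_f rangeI)
  show gf: "inv \<xi> (\<xi> x) = x" for x using Diff_inj[OF assms] by (simp add: inv_f_f)
  have s: "smooth \<xi>" and d: "\<And>x. deriv \<xi> x > 0" using DiffD[OF assms] by auto
  have sm: "smooth (inv \<xi>)" using smooth_inv[OF s _ fg gf] d by (metis less_irrefl)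
  have "deriv (inv \<xi>) y = 1 / deriv \<xi> (inv \<xi> y)" for y
    using inv_DERIV[of 0 \<xi> "inv \<xi>" y] s d fg gf unfolding smooth_Ck
    by (metis DERIV_imp_deriv less_irrefl)
  then have pos: "deriv (inv \<xi>) y > 0" for y using d by simp
  have per: "inv \<xi> (y + 1) = inv \<xi> y + 1" for y
  proof -
    have "\<xi> (inv \<xi> y + 1) = y + 1" using DiffD(2)[OF assms] fg by simp
    then show ?thesis using gf by metis
  qed
  show "inv \<xi> \<in> Diff_S1" unfolding Diff_S1_def using sm pos per by auto
qed

lemma L_comp:
  assumes "\<xi> \<in> Diff_S1" "\<eta> \<in> Diff_S1"
  shows "L_act lam \<eta> (L_act lam \<xi> m) = L_act lam (\<lambda>x. \<xi> (\<eta> x)) m"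
proof
  fix x
  have "deriv \<xi> (\<eta> x) > 0" "deriv \<eta> x > 0" using DiffD assms by auto
  then show "L_act lam \<eta> (L_act lam \<xi> m) x = L_act lam (\<lambda>x. \<xi> (\<eta> x)) m x"
    unfolding L_act_def using deriv_comp[of \<xi> \<eta> x] DiffD assms
    by (simp add: powr_mult)
qed

lemma L_id: "L_act lam (\<lambda>x. x) m = m"
  unfolding L_act_def deriv_id by simp

lemma MD:
  assumes "m \<in> M_dens"
  shows "smooth m" "\<And>x. m (x + 1) = m x" "\<And>x. m x \<noteq> 0"
  using assms unfolding M_dens_def F_dens_def periodic1_def by auto

lemma L_in_M:
  assumes "m \<in> M_dens" "\<xi> \<in> Diff_S1"
  shows "L_act lam \<xi> m \<in> M_dens"
proof -
  note d = DiffD[OF assms(2)] and mm = MD[OF assms(1)]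
  have a: "smooth (\<lambda>x. m (\<xi> x))" by (rule smooth_comp[OF mm(1) d(1)])
  have b: "smooth (\<lambda>x. deriv \<xi> x powr lam)" by (rule smooth_powr[OF smooth_deriv[OF d(1)] d(3)])
  have "smooth (L_act lam \<xi> m)" unfolding L_act_def using smooth_mult[OF a b] .
  moreover have "periodic1 (L_act lam \<xi> m)"
    unfolding periodic1_def L_act_def using d mm Diff_deriv_periodic[OF assms(2)] by simp
  moreover have "\<forall>x. L_act lam \<xi> m x \<noteq> 0"
    unfolding L_act_def using d(3) mm(3) by (metis less_irrefl mult_eq_0_iff powr_eq_0_iff)
  ultimately show ?thesis unfolding M_dens_def F_dens_def by auto
qed


lemma FTC_real:
  assumes "\<And>x. (P has_real_derivative g x) (at x)" "a \<le> b"
  shows "(g has_integral (P b - P a)) {a..b}"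
  by (rule fundamental_theorem_of_calculus[OF assms(2)])
     (use assms(1) in \<open>auto simp: has_real_derivative_iff_has_vector_derivative[symmetric] intro: has_field_derivative_at_within\<close>)

lemma antideriv_periodic:
  assumes d: "\<And>x. (P has_real_derivative g x) (at x)" and per: "\<And>x. g (x + 1) = g x"
  shows "P (y + 1) - P y = P 1 - P 0"
proof -
  have "((\<lambda>y. P (y + 1) - P y) has_real_derivative 0) (at x)" for x
  proof -
    have "((\<lambda>y. P (y + 1)) has_real_derivative g (x + 1) * 1) (at x)"
      by (rule DERIV_chain2[OF d]) (auto intro!: derivative_eq_intros)
    then have "((\<lambda>y. P (y + 1) - P y) has_real_derivative g (x + 1) * 1 - g x) (at x)"
      by (intro DERIV_diff d)
    then show ?thesis using per by simp
  qed
  from DERIV_isconst_all[OF allI[OF this]] show ?thesis by (metis add_0)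
qed

lemma int_change:
  assumes cg: "\<And>x. isCont g x" and per: "\<And>x. g (x + 1) = g x" and xi: "\<xi> \<in> Diff_S1"
  shows "integral {0..1} (\<lambda>x. g (\<xi> x) * deriv \<xi> x) = integral {0..1} g"
proof -
  obtain P where d: "\<And>x. (P has_real_derivative g x) (at x)" using antideriv[OF cg] by blast
  have s: "smooth \<xi>" using DiffD[OF xi] by blast
  have "((\<lambda>x. P (\<xi> x)) has_real_derivative g (\<xi> x) * deriv \<xi> x) (at x)" for x
    by (rule DERIV_chain2[OF d smooth_DERIV[OF s]])
  then have "((\<lambda>x. g (\<xi> x) * deriv \<xi> x) has_integral (P (\<xi> 1) - P (\<xi> 0))) {0..1}"
    using FTC_real[of "\<lambda>x. P (\<xi> x)"] by auto
  moreover have "P (\<xi> 1) - P (\<xi> 0) = P 1 - P 0"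
    using DiffD(2)[OF xi, of 0] antideriv_periodic[OF d per, of "\<xi> 0"] by simp
  moreover have "(g has_integral (P 1 - P 0)) {0..1}" using FTC_real[OF d] by simp
  ultimately show ?thesis using integral_unique by metis
qed

lemma abs_powr_eq: "(x::real) \<noteq> 0 \<Longrightarrow> \<bar>x\<bar> powr a = (x * x) powr (a / 2)"
proof -
  assume x: "x \<noteq> 0"
  have e: "\<bar>x\<bar> powr 2 = x * x" using x by (simp add: powr_numeral power2_eq_square)
  have "\<bar>x\<bar> powr a = (\<bar>x\<bar> powr 2) powr (a / 2)" by (subst powr_powr) simp
  then show ?thesis using e by metis
qed

lemma g_smooth:
  assumes "m \<in> M_dens"
  shows "smooth (\<lambda>x. \<bar>m x\<bar> powr a)" "\<And>x. \<bar>m x\<bar> powr a > 0"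
proof -
  note mm = MD[OF assms]
  have "smooth (\<lambda>x. (m x * m x) powr (a / 2))"
    by (rule smooth_powr[OF smooth_mult[OF mm(1) mm(1)]]) (use mm(3) in \<open>simp add: zero_less_mult_iff\<close>, metis not_less_iff_gr_or_eq)
  then show "smooth (\<lambda>x. \<bar>m x\<bar> powr a)" using abs_powr_eq mm(3) by simp
  show "\<And>x. \<bar>m x\<bar> powr a > 0" using mm(3) by simp
qed

lemma H_L:
  assumes lam: "lam \<noteq> 0" and m: "m \<in> M_dens" and xi: "\<xi> \<in> Diff_S1"
  shows "H_neg1 lam (L_act lam \<xi> m) = H_neg1 lam m"
proof -
  note mm = MD[OF m] and d = DiffD[OF xi]
  define g where "g y = \<bar>m y\<bar> powr (1 / lam)" for y
  have pt: "\<bar>L_act lam \<xi> m x\<bar> powr (1 / lam) = g (\<xi> x) * deriv \<xi> x" for x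
  proof -
    have dx: "deriv \<xi> x > 0" using d by blast
    have "\<bar>L_act lam \<xi> m x\<bar> powr (1 / lam) = (\<bar>m (\<xi> x)\<bar> * deriv \<xi> x powr lam) powr (1 / lam)"
      unfolding L_act_def using dx by (simp add: abs_mult)
    also have "\<dots> = g (\<xi> x) * (deriv \<xi> x powr lam) powr (1 / lam)"
      unfolding g_def by (simp add: powr_mult)
    also have "(deriv \<xi> x powr lam) powr (1 / lam) = deriv \<xi> x"
      using dx lam by (simp add: powr_powr)
    finally show ?thesis .
  qed
  have cg: "isCont g x" for x unfolding g_def by (rule smooth_cont[OF g_smooth(1)[OF m]])
  have per: "g (x + 1) = g x" for x unfolding g_def using mm by simp
  show ?thesis unfolding H_neg1_def pt using int_change[OF cg per xi] unfolding g_def by simp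
qed

lemma inv_map_L:
  assumes lam: "lam \<noteq> 0" and m: "m \<in> M_dens" and xi: "\<xi> \<in> Diff_S1"
  shows "inv_map lam (L_act lam \<xi> m) = inv_map lam m"
proof -
  note mm = MD[OF m] and d = DiffD[OF xi]
  have "sgn (L_act lam \<xi> m 0) = sgn (m (\<xi> 0))"
    unfolding L_act_def using d(3)[of 0] by (simp add: sgn_mult)
  also have "\<dots> = sgn (m 0)" by (rule no_sign_change) (use mm smooth_cont in auto)
  finally show ?thesis unfolding inv_map_def H_L[OF assms] by simp
qed

lemma const_M: "c \<noteq> 0 \<Longrightarrow> (\<lambda>x. c) \<in> M_dens"
  unfolding M_dens_def F_dens_def periodic1_def using smooth_const by auto

lemma inv_map_const: "lam \<noteq> 0 \<Longrightarrow> inv_map lam (\<lambda>x. c) = c"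
  unfolding inv_map_def H_neg1_def by (simp add: powr_powr sgn_mult_abs)

lemma normal_form:
  assumes lam: "lam \<noteq> 0" and m: "m \<in> M_dens"
  shows "\<exists>\<xi>\<in>Diff_S1. m = L_act lam \<xi> (\<lambda>x. inv_map lam m)"
proof -
  note mm = MD[OF m]
  define g where "g y = \<bar>m y\<bar> powr (1 / lam)" for y
  have gs: "smooth g" and gp: "\<And>x. g x > 0" unfolding g_def using g_smooth[OF m] by auto
  have per: "g (x + 1) = g x" for x unfolding g_def using mm by simp
  obtain P where d: "\<And>x. (P has_real_derivative g x) (at x)" using antideriv[OF smooth_cont[OF gs]] by blast
  define H where "H = P 1 - P 0"
  have Hint: "H_neg1 lam m = H" unfolding H_neg1_def H_def g_def[symmetric]
    using FTC_real[OF d, of 0 1] by (simp add: integral_unique)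
  have "P 0 < P 1" by (rule DERIV_pos_imp_increasing) (use d gp in auto)
  then have Hp: "H > 0" unfolding H_def by simp
  define \<xi> where "\<xi> x = (P x - P 0) / H" for x
  have dxi: "(\<xi> has_real_derivative g x * (1 / H)) (at x)" for x
    unfolding \<xi>_def using d Hp by (auto intro!: derivative_eq_intros simp: field_simps)
  have dxi': "deriv \<xi> x = g x * (1 / H)" for x using dxi DERIV_imp_deriv by blast
  have xs: "smooth \<xi>" by (rule smooth_antideriv[OF dxi smooth_mult[OF gs smooth_const]])
  have xper: "\<xi> (x + 1) = \<xi> x + 1" for x
    using antideriv_periodic[OF d per, of x] Hp unfolding \<xi>_def H_def by (simp add: field_simps)
  have xpos: "deriv \<xi> x > 0" for x using dxi' gp Hp by simp
  have xD: "\<xi> \<in> Diff_S1" unfolding Diff_S1_def using xs xper xpos by auto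
  have "m x = L_act lam \<xi> (\<lambda>x. inv_map lam m) x" for x
  proof -
    have sg: "sgn (m 0) = sgn (m x)" by (rule no_sign_change) (use mm smooth_cont in auto)
    have "(g x * (1 / H)) powr lam = g x powr lam / H powr lam"
      using gp[of x] Hp by (simp add: powr_divide)
    moreover have "g x powr lam = \<bar>m x\<bar>" unfolding g_def using lam by (simp add: powr_powr)
    ultimately have "L_act lam \<xi> (\<lambda>x. inv_map lam m) x = sgn (m x) * \<bar>m x\<bar>"
      unfolding L_act_def dxi' inv_map_def Hint sg using Hp by simp
    then show ?thesis by (simp add: sgn_mult_abs)
  qed
  then show ?thesis using xD by blast
qed

lemma inv_map_nz:
  assumes lam: "lam \<noteq> 0" and m: "m \<in> M_dens"
  shows "inv_map lam m \<noteq> 0"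
proof
  assume "inv_map lam m = 0"
  then have "m 0 = 0" using normal_form[OF assms] unfolding L_act_def by auto
  then show False using MD(3)[OF m] by blast
qed

lemma self_class:
  assumes "m \<in> M_dens" shows "m \<in> orbit_rel lam `` {m}"
proof -
  have "m = L_act lam (\<lambda>x. x) m" by (simp add: L_id)
  then have "(m, m) \<in> orbit_rel lam" unfolding orbit_rel_def using assms Diff_id by blast
  then show ?thesis by blast
qed

lemma class_L:
  assumes lam: "lam \<noteq> 0" and m: "m \<in> M_dens" and xi: "\<xi> \<in> Diff_S1"
  shows "orbit_rel lam `` {L_act lam \<xi> m} = orbit_rel lam `` {m}"
proof -
  define n where "n = L_act lam \<xi> m"
  have nM: "n \<in> M_dens" unfolding n_def using L_in_M[OF m xi] .
  have mback: "m = L_act lam (inv \<xi>) n"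
  proof -
    have "L_act lam (inv \<xi>) n = L_act lam (\<lambda>x. \<xi> (inv \<xi> x)) m"
      unfolding n_def using L_comp[OF xi Diff_inv(1)[OF xi]] .
    also have "(\<lambda>x. \<xi> (inv \<xi> x)) = (\<lambda>x. x)" using Diff_inv(2)[OF xi] by auto
    finally show ?thesis using L_id by simp
  qed
  show ?thesis unfolding n_def[symmetric]
  proof
    show "orbit_rel lam `` {n} \<subseteq> orbit_rel lam `` {m}"
    proof
      fix k assume "k \<in> orbit_rel lam `` {n}"
      then obtain \<eta> where k: "k \<in> M_dens" "\<eta> \<in> Diff_S1" "k = L_act lam \<eta> n"
        unfolding orbit_rel_def by auto
      then have "k = L_act lam (\<lambda>x. \<xi> (\<eta> x)) m" unfolding n_def using L_comp[OF xi k(2)] by simp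
      then show "k \<in> orbit_rel lam `` {m}" unfolding orbit_rel_def
        using k m Diff_comp[OF xi k(2)] by auto
    qed
  next
    show "orbit_rel lam `` {m} \<subseteq> orbit_rel lam `` {n}"
    proof
      fix k assume "k \<in> orbit_rel lam `` {m}"
      then obtain \<eta> where k: "k \<in> M_dens" "\<eta> \<in> Diff_S1" "k = L_act lam \<eta> m"
        unfolding orbit_rel_def by auto
      then have "k = L_act lam (\<lambda>x. inv \<xi> (\<eta> x)) n"
        using mback L_comp[OF Diff_inv(1)[OF xi] k(2)] by metis
      then show "k \<in> orbit_rel lam `` {n}" unfolding orbit_rel_def
        using k nM Diff_comp[OF Diff_inv(1)[OF xi] k(2)] by auto
    qed
  qed
qed

lemma class_const:
  assumes lam: "lam \<noteq> 0" and m: "m \<in> M_dens"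
  shows "orbit_rel lam `` {m} = orbit_rel lam `` {\<lambda>x. inv_map lam m}"
proof -
  obtain \<xi> where xi: "\<xi> \<in> Diff_S1" and e: "m = L_act lam \<xi> (\<lambda>x. inv_map lam m)"
    using normal_form[OF assms] by blast
  have "orbit_rel lam `` {L_act lam \<xi> (\<lambda>x. inv_map lam m)} = orbit_rel lam `` {\<lambda>x. inv_map lam m}"
    by (rule class_L[OF lam const_M[OF inv_map_nz[OF assms]] xi])
  then show ?thesis using e by simp
qed

theorem proposition4p2:
  fixes lam :: real
  assumes "lam \<noteq> 0"
  shows "(\<forall>m\<in>M_dens. \<forall>\<xi>\<in>Diff_S1. L_act lam \<xi> m \<in> M_dens \<and> inv_map lam (L_act lam \<xi> m) = inv_map lam m)
    \<and> (\<exists>G. bij_betw G (M_dens // orbit_rel lam) (UNIV - {0})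
           \<and> (\<forall>m\<in>M_dens. G (orbit_rel lam `` {m}) = inv_map lam m))"
proof (intro conjI)
  show "\<forall>m\<in>M_dens. \<forall>\<xi>\<in>Diff_S1. L_act lam \<xi> m \<in> M_dens \<and> inv_map lam (L_act lam \<xi> m) = inv_map lam m"
    using L_in_M inv_map_L[OF assms] by blast
  define G where "G C = inv_map lam (SOME k. k \<in> C)" for C
  have Gc: "G (orbit_rel lam `` {m}) = inv_map lam m" if m: "m \<in> M_dens" for m
  proof -
    have "(SOME k. k \<in> orbit_rel lam `` {m}) \<in> orbit_rel lam `` {m}"
      using self_class[OF m, where lam=lam] by (metis someI)
    then obtain \<eta> where "\<eta> \<in> Diff_S1" "(SOME k. k \<in> orbit_rel lam `` {m}) = L_act lam \<eta> m"
      unfolding orbit_rel_def by auto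
    then show ?thesis unfolding G_def using inv_map_L[OF assms m] by simp
  qed
  have "bij_betw G (M_dens // orbit_rel lam) (UNIV - {0})"
    unfolding bij_betw_def
  proof
    show "inj_on G (M_dens // orbit_rel lam)"
    proof (rule inj_onI)
      fix C1 C2 assume c1: "C1 \<in> M_dens // orbit_rel lam" and c2: "C2 \<in> M_dens // orbit_rel lam"
        and eq: "G C1 = G C2"
      obtain m1 where m1: "m1 \<in> M_dens" "C1 = orbit_rel lam `` {m1}" using c1 by (auto elim: quotientE)
      obtain m2 where m2: "m2 \<in> M_dens" "C2 = orbit_rel lam `` {m2}" using c2 by (auto elim: quotientE)
      have "inv_map lam m1 = inv_map lam m2" using eq m1 m2 Gc by simp
      then show "C1 = C2" using m1 m2 class_const[OF assms] by metis
    qed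
  next
    show "G ` (M_dens // orbit_rel lam) = UNIV - {0}"
    proof
      show "G ` (M_dens // orbit_rel lam) \<subseteq> UNIV - {0}"
        using Gc inv_map_nz[OF assms] by (auto elim!: quotientE)
    next
      show "UNIV - {0} \<subseteq> G ` (M_dens // orbit_rel lam)"
      proof
        fix c :: real assume "c \<in> UNIV - {0}"
        then have c: "(\<lambda>x. c) \<in> M_dens" using const_M by auto
        have "G (orbit_rel lam `` {\<lambda>x. c}) = c" using Gc[OF c] inv_map_const[OF assms] by simp
        moreover have "orbit_rel lam `` {\<lambda>x. c} \<in> M_dens // orbit_rel lam"
          using c by (rule quotientI)
        ultimately show "c \<in> G ` (M_dens // orbit_rel lam)" by (metis imageI)
      qed
    qed
  qed
  then show "\<exists>G. bij_betw G (M_dens // orbit_rel lam) (UNIV - {0})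
           \<and> (\<forall>m\<in>M_dens. G (orbit_rel lam `` {m}) = inv_map lam m)"
    using Gc by blast
qed

end
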